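(* For every $N\ge3$ and every $\lambda\in(0,1]$, the matrix $M(\lambda)$ is primitive (some power of it has all entries strictly positive).
   Context: Fix an integer $N\ge 3$. Let $\mathcal G_N$ be the groupoid with object set $\{1,\dots,N\}$ generated by arrows $A_{i,j}^{(k)}$, $i\neq j\in\{1,\dots,N\}$, $k\in\{-1,1\}$, with source $i$ and target $j$, subject to the relations $A_{i,j}^{(k)}A_{j,\ell}^{(k)}=A_{i,\ell}^{(k)}$ for all $i,j,\ell$, $k$, with the convention $A_{i,i}^{(k)}:=e_i$ (unit at object $i$). Let $\mathcal A$ be its arrow set. Let $\{W_n\}_{n\ge0}$ be the Markov chain on $\mathcal A$ with $P(W_{n+1}=y\mid W_n=x)=p_{i,j}^{(k)}$ if $x^{-1}y=A_{i,j}^{(k)}$ with $i\ne j$ and $0$ otherwise, where $p_{i,j}^{(k)}\in(0,1)$ and $\sum_{j\ne i}\sum_{k=\pm1}p_{i,j}^{(k)}=1$ for each $i$; $E_x$ denotes expectation with $W_0=x$. For $x\in\mathcal A$ let $T(0,x)=\inf\{n\ge0:W_n=W_0x\}$ (possibly $\infty$) and $R_{i,j}^{(k)}(\lambda)=E_{e_i}[\lambda^{T(0,A_{i,j}^{(k)})}]$. $M(\lambda)$ is the $2N(N-1)\times2N(N-1)$ matrix with rows and columns indexed by triples $(i,j,k)$, $i\ne j$, $k\in\{\pm1\}$, whose entry in row $(i,j,k)$ and column $(i',j',k')$ is: $\lambda p_{i,i'}^{(k)}$ if $i'\notin\{i,j\}$, $j'=j$, $k'=k$; $\lambda p_{i,i'}^{(-k)}R_{i,j}^{(k)}(\lambda)$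 if $i'\ne i$, $j'=i$, $k'=-k$; $\lambda\sum_{\ell\neq i}p_{i,\ell}^{(-k)}R_{\ell,i}^{(-k)}(\lambda)$ if $(i',j',k')=(i,j,k)$; and $0$ otherwise. *)

theory Defs
  imports Complex_Main
begin

text \<open>Arrows of the groupoid G_N in reduced normal form: a source object i0 and a
list of steps (object, label) with consecutive objects distinct and labels alternating.
The unit e_i is (i, []); the generator A_{i,j}^{(k)} is (i, [(j,k)]).\<close>

type_synonym arrow = "nat \<times> (nat \<times> int) list"

definition tgt :: "arrow \<Rightarrow> nat" where
  "tgt x = (case x of (i0, ws) \<Rightarrow> if ws = [] then i0 else fst (last ws))"

text \<open>Right multiplication of a reduced arrow x by the generator A_{tgt x, j}^{(k)}.\<close>
definition gmul :: "arrow \<Rightarrow> nat \<Rightarrow> int \<Rightarrow> arrow" where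
  "gmul x j k = (case x of (i0, ws) \<Rightarrow>
     if ws = [] then (i0, [(j, k)])
     else if snd (last ws) = k then
       (let prev = (if length ws = 1 then i0 else fst (last (butlast ws))) in
        if j = prev then (i0, butlast ws) else (i0, butlast ws @ [(j, k)]))
     else (i0, ws @ [(j, k)]))"

text \<open>fp N p n x y = probability that the walk started at x first hits y at time n.\<close>
fun fp :: "nat \<Rightarrow> (nat \<Rightarrow> nat \<Rightarrow> int \<Rightarrow> real) \<Rightarrow> nat \<Rightarrow> arrow \<Rightarrow> arrow \<Rightarrow> real" where
  "fp N p 0 x y = (if x = y then 1 else 0)"
| "fp N p (Suc n) x y = (if x = y then 0 else
     (\<Sum>j\<in>{1..N} - {tgt x}. \<Sum>k\<in>{-1, 1}. p (tgt x) j k * fp N p n (gmul x j k) y))"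

text \<open>R_{i,j}^{(k)}(lambda) = E_{e_i}[lambda^T], with T = infinity contributing 0.\<close>
definition Rgf :: "nat \<Rightarrow> (nat \<Rightarrow> nat \<Rightarrow> int \<Rightarrow> real) \<Rightarrow> real \<Rightarrow> nat \<Rightarrow> nat \<Rightarrow> int \<Rightarrow> real" where
  "Rgf N p lam i j k = (\<Sum>n. lam ^ n * fp N p n (i, []) (i, [(j, k)]))"

definition Idx :: "nat \<Rightarrow> (nat \<times> nat \<times> int) set" where
  "Idx N = {(i, j, k). i \<in> {1..N} \<and> j \<in> {1..N} \<and> i \<noteq> j \<and> k \<in> {-1, 1}}"

definition Mmat :: "nat \<Rightarrow> (nat \<Rightarrow> nat \<Rightarrow> int \<Rightarrow> real) \<Rightarrow> real \<Rightarrow>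
    (nat \<times> nat \<times> int) \<Rightarrow> (nat \<times> nat \<times> int) \<Rightarrow> real" where
  "Mmat N p lam r c = (case r of (i, j, k) \<Rightarrow> case c of (i', j', k') \<Rightarrow>
     if i' \<notin> {i, j} \<and> j' = j \<and> k' = k then lam * p i i' k
     else if i' \<noteq> i \<and> j' = i \<and> k' = - k then lam * p i i' (- k) * Rgf N p lam i j k
     else if (i', j', k') = (i, j, k) then
       lam * (\<Sum>l\<in>{1..N} - {i}. p i l (- k) * Rgf N p lam l i (- k))
     else 0)"

fun mpow :: "'a set \<Rightarrow> ('a \<Rightarrow> 'a \<Rightarrow> real) \<Rightarrow> nat \<Rightarrow> 'a \<Rightarrow> 'a \<Rightarrow> real" where
  "mpow I M 0 a b = (if a = b then 1 else 0)"
| "mpow I M (Suc n) a b = (\<Sum>c\<in>I. mpow I M n a c * M c b)"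

definition primitive :: "'a set \<Rightarrow> ('a \<Rightarrow> 'a \<Rightarrow> real) \<Rightarrow> bool" where
  "primitive I M \<longleftrightarrow> (\<exists>m>0. \<forall>a\<in>I. \<forall>b\<in>I. mpow I M m a b > 0)"

end

theory Submission
  imports Defs
begin

definition okA :: "nat \<Rightarrow> arrow \<Rightarrow> bool" where
  "okA N x = (fst x \<in> {1..N} \<and> (\<forall>a\<in>set (snd x). fst a \<in> {1..N}))"

lemma tgt_ok: "okA N x \<Longrightarrow> tgt x \<in> {1..N}"
  unfolding okA_def tgt_def by (cases x) (auto split: if_splits)

lemma gmul_ok: "okA N x \<Longrightarrow> j \<in> {1..N} \<Longrightarrow> okA N (gmul x j k)"
  unfolding okA_def gmul_def by (cases x) (auto simp: Let_def dest: in_set_butlastD split: if_splits)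

locale PP =
  fixes N :: nat and p :: "nat \<Rightarrow> nat \<Rightarrow> int \<Rightarrow> real"
  assumes pnn: "\<And>i j k. i \<in> {1..N} \<Longrightarrow> j \<in> {1..N} \<Longrightarrow> i \<noteq> j \<Longrightarrow> k \<in> {-1, 1} \<Longrightarrow> 0 \<le> p i j k"
    and psum: "\<And>i. i \<in> {1..N} \<Longrightarrow> (\<Sum>j\<in>{1..N} - {i}. \<Sum>k\<in>{-1, 1}. p i j k) = 1"
begin

lemma fp_nonneg: "okA N x \<Longrightarrow> 0 \<le> fp N p n x y"
proof (induction n arbitrary: x)
  case 0
  then show ?case by simp
next
  case (Suc n)
  have t: "tgt x \<in> {1..N}" using tgt_ok[OF Suc.prems] .
  show ?case
  proof (cases "x = y")
    case False
    have "0 \<le> (\<Sum>j\<in>{1..N} - {tgt x}. \<Sum>k\<in>{-1, 1}. p (tgt x) j k * fp N p n (gmul x j k) y)"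
    proof (intro sum_nonneg mult_nonneg_nonneg)
      fix j k assume "j \<in> {1..N} - {tgt x}" "k \<in> {-1, 1::int}"
      then show "0 \<le> p (tgt x) j k" "0 \<le> fp N p n (gmul x j k) y"
        using pnn[of "tgt x" j k] t Suc.IH gmul_ok[OF Suc.prems] by auto
    qed
    then show ?thesis using False by simp
  qed simp
qed

lemma fp_psum: "okA N x \<Longrightarrow> (\<Sum>n<K. fp N p n x y) \<le> 1"
proof (induction K arbitrary: x)
  case 0
  then show ?case by simp
next
  case (Suc K)
  have t: "tgt x \<in> {1..N}" using tgt_ok[OF Suc.prems] .
  have e: "(\<Sum>n<Suc K. fp N p n x y) = fp N p 0 x y + (\<Sum>n<K. fp N p (Suc n) x y)"
    by (rule sum.lessThan_Suc_shift)
  show ?case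
  proof (cases "x = y")
    case True
    then show ?thesis using e by simp
  next
    case False
    have "(\<Sum>n<K. fp N p (Suc n) x y) =
      (\<Sum>j\<in>{1..N} - {tgt x}. \<Sum>k\<in>{-1, 1}. p (tgt x) j k * (\<Sum>n<K. fp N p n (gmul x j k) y))"
      using False by (simp add: sum_distrib_left sum.swap[of _ "{..<K}"])
    also have "\<dots> \<le> (\<Sum>j\<in>{1..N} - {tgt x}. \<Sum>k\<in>{-1, 1}. p (tgt x) j k * 1)"
      apply (intro sum_mono mult_left_mono)
      using Suc.IH gmul_ok[OF Suc.prems] t by (auto intro!: pnn)
    also have "\<dots> = 1" using psum[OF t] by simp
    finally show ?thesis using e False by simp
  qed
qed

lemma R_summable:
  assumes "okA N x" "0 \<le> lam" "lam \<le> (1::real)"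
  shows "summable (\<lambda>n. lam ^ n * fp N p n x y)"
proof (rule summableI_nonneg_bounded[where x=1])
  fix n show "0 \<le> lam ^ n * fp N p n x y"
    using assms fp_nonneg by simp
next
  fix K
  have "(\<Sum>n<K. lam ^ n * fp N p n x y) \<le> (\<Sum>n<K. fp N p n x y)"
    apply (rule sum_mono)
    using assms fp_nonneg[OF assms(1)]
    by (simp add: mult_left_le_one_le power_le_one)
  also have "\<dots> \<le> 1" using fp_psum[OF assms(1)] .
  finally show "(\<Sum>n<K. lam ^ n * fp N p n x y) \<le> 1" .
qed

lemma R_pos:
  assumes i: "i \<in> {1..N}" and j: "j \<in> {1..N}" and ij: "i \<noteq> j" and k: "k \<in> {-1,1}"
    and ppos: "0 < p i j k" and lam: "0 < lam" "lam \<le> (1::real)"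
  shows "0 < Rgf N p lam i j k"
  unfolding Rgf_def
proof (rule suminf_pos2[where i=1])
  have ok: "okA N (i, [])" using i by (simp add: okA_def)
  show "summable (\<lambda>n. lam ^ n * fp N p n (i, []) (i, [(j, k)]))"
    using R_summable[OF ok] lam by simp
  show "\<And>n. 0 \<le> lam ^ n * fp N p n (i, []) (i, [(j, k)])"
    using fp_nonneg[OF ok] lam by simp
  let ?f = "\<lambda>j' k'. p i j' k' * (if (i, [(j', k')]) = (i, [(j, k)]) then 1 else 0::real)"
  have "fp N p 1 (i, []) (i, [(j, k)]) = (\<Sum>j'\<in>{1..N} - {i}. \<Sum>k'\<in>{-1, 1}. ?f j' k')"
    by (simp add: tgt_def gmul_def)
  also have "\<dots> \<ge> (\<Sum>k'\<in>{-1, 1}. ?f j k')"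
    by (rule member_le_sum) (use i j ij in \<open>auto intro!: sum_nonneg pnn\<close>)
  moreover have "(\<Sum>k'\<in>{-1, 1}. ?f j k') \<ge> ?f j k"
    by (rule member_le_sum) (use i j ij k in \<open>auto intro!: pnn\<close>)
  ultimately have "fp N p 1 (i, []) (i, [(j, k)]) \<ge> p i j k" by simp
  then show "0 < lam ^ 1 * fp N p 1 (i, []) (i, [(j, k)])"
    using ppos lam by simp
qed

lemma R_nonneg:
  assumes i: "i \<in> {1..N}" and lam: "0 \<le> lam" "lam \<le> (1::real)"
  shows "0 \<le> Rgf N p lam i j k"
  unfolding Rgf_def
proof (rule suminf_nonneg)
  have ok: "okA N (i, [])" using i by (simp add: okA_def)
  show "summable (\<lambda>n. lam ^ n * fp N p n (i, []) (i, [(j, k)]))"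
    using R_summable[OF ok] lam by simp
  show "\<And>n. 0 \<le> lam ^ n * fp N p n (i, []) (i, [(j, k)])"
    using fp_nonneg[OF ok] lam by simp
qed

end

lemma mpow_nonneg:
  assumes "finite I" "\<And>a b. a \<in> I \<Longrightarrow> b \<in> I \<Longrightarrow> 0 \<le> M a b" "b \<in> I"
  shows "0 \<le> mpow I M n a b"
  using assms(3)
proof (induction n arbitrary: b)
  case 0 then show ?case by simp
next
  case (Suc n) then show ?case using assms by (auto intro!: sum_nonneg)
qed

lemma mpow_step:
  assumes "finite I" "\<And>a b. a \<in> I \<Longrightarrow> b \<in> I \<Longrightarrow> 0 \<le> M a b"
    and "0 < mpow I M n a c" "c \<in> I" "b \<in> I" "0 < M c b"
  shows "0 < mpow I M (Suc n) a b"
proof -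
  have "mpow I M n a c * M c b \<le> (\<Sum>c\<in>I. mpow I M n a c * M c b)"
    by (rule member_le_sum) (use assms mpow_nonneg[OF assms(1,2)] in \<open>auto intro!: mult_nonneg_nonneg\<close>)
  moreover have "0 < mpow I M n a c * M c b" using assms by simp
  ultimately show ?thesis by simp
qed


lemma third_exists:
  assumes "N \<ge> (3::nat)" "i \<in> {1..N}" "j \<in> {1..N}"
  obtains x where "x \<in> {1..N}" "x \<noteq> i" "x \<noteq> j"
proof -
  have "\<not> {1..N} \<subseteq> {i, j}"
  proof
    assume "{1..N} \<subseteq> {i, j}"
    then have "card {1..N} \<le> card {i, j}" by (intro card_mono) auto
    also have "\<dots> \<le> 2" by (simp add: card_insert_le_m1)
    finally show False using assms by simp
  qed
  then obtain x where "x \<in> {1..N}" "x \<notin> {i, j}" by blast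
  then show ?thesis by (intro that) auto
qed

theorem lemmaA1:
  fixes N :: nat and p :: "nat \<Rightarrow> nat \<Rightarrow> int \<Rightarrow> real" and lam :: real
  assumes "N \<ge> 3"
    and "\<And>i j k. i \<in> {1..N} \<Longrightarrow> j \<in> {1..N} \<Longrightarrow> i \<noteq> j \<Longrightarrow> k \<in> {-1, 1} \<Longrightarrow>
           0 < p i j k \<and> p i j k < 1"
    and "\<And>i. i \<in> {1..N} \<Longrightarrow> (\<Sum>j\<in>{1..N} - {i}. \<Sum>k\<in>{-1, 1}. p i j k) = 1"
    and "0 < lam" and "lam \<le> 1"
  shows "primitive (Idx N) (Mmat N p lam)"
proof -
  note pp = assms(2)
  interpret PP N p
    by standard (use assms(2,3) in \<open>auto simp: less_imp_le\<close>)
  have Rp: "0 < Rgf N p lam i j k"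
    if "i \<in> {1..N}" "j \<in> {1..N}" "i \<noteq> j" "k \<in> {-1,1}" for i j k
    using R_pos[OF that pp[OF that, THEN conjunct1]] assms(4,5) .
  have Rn: "0 \<le> Rgf N p lam i j k" if "i \<in> {1..N}" for i j k
    using R_nonneg[OF that] assms(4,5) by simp
  have mk: "- k \<in> {-1, 1}" if "k \<in> {-1, 1::int}" for k using that by auto
  have fin: "finite (Idx N)"
  proof -
    have "Idx N \<subseteq> {1..N} \<times> {1..N} \<times> {-1, 1}" by (auto simp: Idx_def)
    then show ?thesis by (rule finite_subset) auto
  qed
  have Mn: "0 \<le> Mmat N p lam r c" if "r \<in> Idx N" "c \<in> Idx N" for r c
  proof -
    obtain i j k i' j' k' where rc: "r = (i, j, k)" "c = (i', j', k')" by (cases r, cases c) auto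
    have h: "i \<in> {1..N}" "j \<in> {1..N}" "i \<noteq> j" "k \<in> {-1,1}"
      "i' \<in> {1..N}" "j' \<in> {1..N}" "i' \<noteq> j'" "k' \<in> {-1,1}"
      using that rc by (auto simp: Idx_def)
    have s: "0 \<le> (\<Sum>l\<in>{1..N} - {i}. p i l (- k) * Rgf N p lam l i (- k))"
      using h by (auto intro!: sum_nonneg mult_nonneg_nonneg pnn Rn mk)
    show ?thesis
    proof -
      have b1: "0 \<le> lam * p i i' k" if "i' \<noteq> i"
        using pnn[of i i' k] h that assms(4) by simp
      have b2: "0 \<le> lam * p i i' (- k) * Rgf N p lam i j k" if "i' \<noteq> i"
        using pnn[of i i' "- k"] h that assms(4) mk[of k] Rn[of i j k] by simp
      have b3: "0 \<le> lam * (\<Sum>l\<in>{1..N} - {i}. p i l (- k) * Rgf N p lam l i (- k))"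
        using s assms(4) by simp
      show ?thesis unfolding rc Mmat_def prod.case
        using b1 b2 b3 by (simp split: if_split)
    qed
  qed
  have Md: "0 < Mmat N p lam r r" if "r \<in> Idx N" for r
  proof -
    obtain i j k where rc: "r = (i, j, k)" by (cases r) auto
    have h: "i \<in> {1..N}" "j \<in> {1..N}" "i \<noteq> j" "k \<in> {-1,1}"
      using that rc by (auto simp: Idx_def)
    obtain l where l: "l \<in> {1..N}" "l \<noteq> i" "l \<noteq> j" using third_exists[OF assms(1) h(1,2)] by blast
    have "0 < p i l (- k) * Rgf N p lam l i (- k)"
      using h l pp[of i l "-k"] Rp[of l i "-k"] mk by auto
    also have "\<dots> \<le> (\<Sum>l\<in>{1..N} - {i}. p i l (- k) * Rgf N p lam l i (- k))"
      by (rule member_le_sum) (use h l in \<open>auto intro!: mult_nonneg_nonneg pnn Rn mk\<close>)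
    finally show ?thesis unfolding rc Mmat_def using assms(4) by simp
  qed
  have E1: "0 < Mmat N p lam (i, j, k) (i', j, k)"
    if "(i, j, k) \<in> Idx N" "i' \<in> {1..N}" "i' \<noteq> i" "i' \<noteq> j" for i j k i'
  proof -
    have h: "i \<in> {1..N}" "j \<in> {1..N}" "i \<noteq> j" "k \<in> {-1,1}"
      using that by (auto simp: Idx_def)
    show ?thesis unfolding Mmat_def using that h pp[of i i' k] assms(4) by auto
  qed
  have E2: "0 < Mmat N p lam (i, j, k) (i', i, - k)"
    if "(i, j, k) \<in> Idx N" "i' \<in> {1..N}" "i' \<noteq> i" for i j k i'
  proof -
    have h: "i \<in> {1..N}" "j \<in> {1..N}" "i \<noteq> j" "k \<in> {-1,1}"
      using that by (auto simp: Idx_def)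
    have "0 < p i i' (- k)" using pp[of i i' "-k"] h that mk by auto
    moreover have "0 < Rgf N p lam i j k" using Rp h by auto
    ultimately show ?thesis unfolding Mmat_def using that h assms(4) by auto
  qed
  have walk: "0 < mpow (Idx N) (Mmat N p lam) (Suc (Suc (Suc 0))) a b"
    if "a \<in> Idx N" "x1 \<in> Idx N" "x2 \<in> Idx N" "b \<in> Idx N"
      "0 < Mmat N p lam a x1" "0 < Mmat N p lam x1 x2" "0 < Mmat N p lam x2 b" for a x1 x2 b
  proof -
    have "0 < mpow (Idx N) (Mmat N p lam) 0 a a" by simp
    then have "0 < mpow (Idx N) (Mmat N p lam) (Suc 0) a x1"
      using mpow_step[OF fin, of "Mmat N p lam" 0 a a x1] Mn that by blast
    then have "0 < mpow (Idx N) (Mmat N p lam) (Suc (Suc 0)) a x2"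
      using mpow_step[OF fin, of "Mmat N p lam" "Suc 0" a x1 x2] Mn that by blast
    then show ?thesis
      using mpow_step[OF fin, of "Mmat N p lam" "Suc (Suc 0)" a x2 b] Mn that by blast
  qed
  show ?thesis unfolding primitive_def
  proof (intro exI[of _ "Suc (Suc (Suc 0))"] conjI ballI)
    fix a b assume ab: "a \<in> Idx N" "b \<in> Idx N"
    obtain i j k a' b' c where rc: "a = (i, j, k)" "b = (a', b', c)" by (cases a, cases b) auto
    have h: "i \<in> {1..N}" "j \<in> {1..N}" "i \<noteq> j" "k \<in> {-1,1}"
      "a' \<in> {1..N}" "b' \<in> {1..N}" "a' \<noteq> b'" "c \<in> {-1,1}"
      using ab rc by (auto simp: Idx_def)
    have I: "(u, v, w) \<in> Idx N" if "u \<in> {1..N}" "v \<in> {1..N}" "u \<noteq> v" "w \<in> {-1,1}" for u v w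
      using that by (auto simp: Idx_def)
    obtain x where x: "x \<in> {1..N}" "x \<noteq> i" "x \<noteq> j" using third_exists[OF assms(1) h(1,2)] by blast
    have ck: "c = k \<or> c = - k" using h by auto
    show "0 < mpow (Idx N) (Mmat N p lam) (Suc (Suc (Suc 0))) a b"
    proof (cases "c = - k")
      case True
      show ?thesis
      proof (cases "b' = i")
        case True
        show ?thesis using walk[of a a a b] ab Md rc E2[of i j k a'] h \<open>c = - k\<close> True by auto
      next
        case bi: False
        show ?thesis
        proof (cases "b' = j")
          case False
          show ?thesis using walk[of a a "(b', j, k)" b] ab Md rc E1[of i j k b'] E2[of b' j k a']
              h \<open>c = - k\<close> bi False I by auto
        next
          case bj: True
          have "0 < Mmat N p lam (x, i, - k) (j, x, - (- k))"
            by (rule E2) (use x h I mk in auto)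
          moreover have "0 < Mmat N p lam (j, x, k) (a', j, - k)"
            by (rule E2) (use x h I mk bj in auto)
          ultimately show ?thesis
            using walk[of a "(x, i, -k)" "(j, x, k)" b] ab rc E2[of i j k x]
              h \<open>c = - k\<close> bj x I mk by auto
        qed
      qed
    next
      case False
      then have ck: "c = k" using ck by auto
      show ?thesis
      proof (cases "b' = i")
        case False
        have "0 < Mmat N p lam (b', i, - k) (a', b', - (- k))"
          by (rule E2) (use h I mk False in auto)
        then show ?thesis
          using walk[of a a "(b', i, -k)" b] ab Md rc E2[of i j k b'] h ck False I mk by auto
      next
        case True
        have "0 < Mmat N p lam (x, j, k) (i, x, - k)"
          by (rule E2) (use x h I in auto)
        moreover have "0 < Mmat N p lam (i, x, - k) (a', i, - (- k))"
          by (rule E2) (use x h I mk True in auto)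
        ultimately show ?thesis
          using walk[of a "(x, j, k)" "(i, x, -k)" b] ab rc E1[of i j k x] h ck True x I mk by auto
      qed
    qed
  qed simp
qed

end
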